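(* For each $N\ge1$ let $\{a_n\}_{n=0}^{N-1},\{b_n\}_{n=0}^{N-1},\{c_n\}_{n=1}^{N}$ (depending on $N$) be real sequences with $c_n>0$, $a_{N-1}=0$, $b_{N-1}=\tfrac12$, $c_N=1$, satisfying for $n=1,\dots,N-1$ $$a_{n-1}=a_n\Big(\frac{1}{c_n^2+1}\Big)^{1/2}+b_n\Big(\frac{1}{c_n^2+1}\Big)^{3/2}c_n^2,\quad b_{n-1}=b_n\Big(\frac{1}{c_n^2+1}\Big)^{3/2}+\frac{c_n}{c_n^2+1},\quad a_n+b_n=\frac{1-c_n^2}{c_n(1+c_n^2)^{1/2}},$$ and with $\Delta t_N=1/N$, $\Sigma_0>0$, $\sigma_u>0$ define $\Sigma_n=\Sigma_{n-1}/(1+c_n^2)$, $\beta_n=c_n\sigma_u\Delta t_N^{1/2}\Sigma_{n-1}^{-1/2}$, $\lambda_n=\beta_n\Sigma_{n-1}/(\beta_n^2\Sigma_{n-1}+\sigma_u^2\Delta t_N)$ for $n=1,\dots,N$. Then for every $t\in(0,1)$, as $N\to\infty$: $c_{[Nt]}\to0$, $b_{[Nt]}\to\infty$, $a_{[Nt]}\to\infty$, and $$\frac{c_{[Nt]}}{\Delta t_N^{1/2}}\to\frac{1}{(1-t)^{1/2}},\quad b_{[Nt]}\Delta t_N^{1/2}\to\tfrac12(1-t)^{1/2},\quad a_{[Nt]}\Delta t_N^{1/2}\to\tfrac12(1-t)^{1/2},$$ $$\Sigma_{[Nt]}\to(1-t)\Sigma_0,\qquad \lambda_{[Nt]}\to\frac{\Sigma_0^{1/2}}{\sigma_u},\qquad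 \frac{\beta_{[Nt]}}{\Delta t_N}\to\frac{\sigma_u}{(1-t)\Sigma_0^{1/2}}.$$
   Context: $[x]$ denotes the integer part of $x$. These sequences describe the equilibrium of the risk-neutral insider model (Model 2) of an $N$-period Kyle-type insider trading model, where $\Sigma_n$ is the conditional variance of the asset value after $n$ rounds, $\lambda_n$ the liquidity parameter and $\beta_n$ the insider's trading intensity; the claim concerns only the sequences as defined here. *)

theory Defs
  imports Complex_Main
begin

definition dtN :: "nat \<Rightarrow> real" where
  "dtN N = 1 / real N"

fun Sigma :: "real \<Rightarrow> (nat \<Rightarrow> real) \<Rightarrow> nat \<Rightarrow> real" where
  "Sigma S0 c 0 = S0"
| "Sigma S0 c (Suc n) = Sigma S0 c n / (1 + (c (Suc n))\<^sup>2)"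

definition beta :: "real \<Rightarrow> real \<Rightarrow> nat \<Rightarrow> (nat \<Rightarrow> real) \<Rightarrow> nat \<Rightarrow> real" where
  "beta S0 su N c n = c n * su * sqrt (dtN N) * (Sigma S0 c (n - 1)) powr (-1/2)"

definition lambda :: "real \<Rightarrow> real \<Rightarrow> nat \<Rightarrow> (nat \<Rightarrow> real) \<Rightarrow> nat \<Rightarrow> real" where
  "lambda S0 su N c n =
     beta S0 su N c n * Sigma S0 c (n - 1) /
       ((beta S0 su N c n)\<^sup>2 * Sigma S0 c (n - 1) + su\<^sup>2 * dtN N)"

definition idx :: "nat \<Rightarrow> real \<Rightarrow> nat" where
  "idx N t = nat \<lfloor>real N * t\<rfloor>"

end

theory Submission
  imports Defs "HOL-Real_Asymp.Real_Asymp"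
begin


lemma sqp1: "(x::real)\<^sup>2 + 1 > 0" by (smt (verit) zero_le_power2)
lemma sqp1': "1 + (x::real)\<^sup>2 > 0" by (smt (verit) zero_le_power2)

lemma powr_half_w: "x > 0 \<Longrightarrow> (1 / (x\<^sup>2 + 1)) powr (1/2) = 1 / sqrt (x\<^sup>2 + 1)"
  using sqp1[of x] by (simp add: powr_half_sqrt real_sqrt_divide)

lemma powr_32_w: "x > 0 \<Longrightarrow> (1 / (x\<^sup>2 + 1)) powr (3/2) = 1 / ((x\<^sup>2 + 1) * sqrt (x\<^sup>2 + 1))"
proof -
  assume x: "x > 0"
  have p: "(1 / (x\<^sup>2 + 1)) > 0" using sqp1[of x] by simp
  have "(1 / (x\<^sup>2 + 1)) powr (3/2) = (1 / (x\<^sup>2 + 1)) powr (1 + 1/2)" by simp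
  also have "\<dots> = (1 / (x\<^sup>2 + 1)) powr 1 * (1 / (x\<^sup>2 + 1)) powr (1/2)"
    by (rule powr_add)
  also have "\<dots> = (1 / (x\<^sup>2 + 1)) * (1 / (x\<^sup>2 + 1)) powr (1/2)"
    using p by simp
  also have "\<dots> = 1 / ((x\<^sup>2 + 1) * sqrt (x\<^sup>2 + 1))" using powr_half_w[OF x] by simp
  finally show ?thesis .
qed

lemma sqrt_inv_sq: "x > 0 \<Longrightarrow> sqrt (1 / x\<^sup>2) = 1 / x"
  by (simp add: real_sqrt_divide)

lemma sqrt_q1: "x > 0 \<Longrightarrow> sqrt (1 / x\<^sup>2 + 1) = sqrt (1 + x\<^sup>2) / x"
proof -
  assume x: "x > 0"
  have "1 / x\<^sup>2 + 1 = (1 + x\<^sup>2) / x\<^sup>2" using x by (simp add: field_simps)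
  hence "sqrt (1 / x\<^sup>2 + 1) = sqrt (1 + x\<^sup>2) / sqrt (x\<^sup>2)" by (simp add: real_sqrt_divide)
  thus ?thesis using x by simp
qed

lemma gen_s: "x > 0 \<Longrightarrow> (1 - x\<^sup>2) / (x * (1 + x\<^sup>2) powr (1/2)) = (1 / x\<^sup>2 - 1) / sqrt (1 / x\<^sup>2 + 1)"
proof -
  assume x: "x > 0"
  define r where "r = sqrt (1 + x\<^sup>2)"
  have s: "r > 0" using sqp1'[of x] by (simp add: r_def)
  have p: "(1 + x\<^sup>2) powr (1/2) = r" using sqp1'[of x] by (simp add: powr_half_sqrt r_def)
  have "(1 / x\<^sup>2 - 1) / (r / x) = (1 - x\<^sup>2) / (x * r)" using x s
    by (simp add: field_simps) algebra
  thus ?thesis unfolding sqrt_q1[OF x] p r_def[symmetric] by simp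
qed

lemma gen_prev: assumes x: "x > 0"
  shows "A * (1 / (x\<^sup>2 + 1)) powr (1/2) + B * (1 / (x\<^sup>2 + 1)) powr (3/2) * x\<^sup>2
     + (B * (1 / (x\<^sup>2 + 1)) powr (3/2) + x / (x\<^sup>2 + 1))
    = (A + B) / sqrt (x\<^sup>2 + 1) + x / (x\<^sup>2 + 1)"
proof -
  define r where "r = sqrt (x\<^sup>2 + 1)"
  define y where "y = x\<^sup>2 + 1"
  have s: "r > 0" using sqp1[of x] by (simp add: r_def)
  have yp: "y > 0" using sqp1[of x] by (simp add: y_def)
  have "B * (1 / (y * r)) * x\<^sup>2 + B * (1 / (y * r)) = B * (x\<^sup>2 + 1) / (y * r)"
    using s yp by (simp add: field_simps)
  also have "\<dots> = B / r" using yp s by (simp add: y_def)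
  finally have k: "B * (1 / (y * r)) * x\<^sup>2 + B * (1 / (y * r)) = B / r" .
  show ?thesis unfolding powr_half_w[OF x] powr_32_w[OF x] unfolding r_def[symmetric] unfolding y_def[symmetric]
    using k s by (simp add: field_simps)
qed

lemma gen_prev2: assumes x: "x > 0"
  shows "(1 - x\<^sup>2) / (x * (1 + x\<^sup>2) powr (1/2)) / sqrt (x\<^sup>2 + 1) + x / (x\<^sup>2 + 1)
    = (1 / x\<^sup>2) * sqrt (1 / x\<^sup>2) / (1 / x\<^sup>2 + 1)"
proof -
  define y where "y = x\<^sup>2 + 1"
  define r where "r = sqrt y"
  have s: "r > 0" using sqp1[of x] by (simp add: r_def y_def)
  have yp: "y > 0" using sqp1[of x] by (simp add: y_def)
  have ss: "r * r = y" using sqp1[of x] by (simp add: r_def y_def)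
  have p: "(1 + x\<^sup>2) powr (1/2) = r" using sqp1'[of x] by (simp add: powr_half_sqrt add.commute r_def y_def)
  have l: "(1 - x\<^sup>2) / (x * r) / r + x / y = 1 / (x * y)"
  proof -
    have "(1 - x\<^sup>2) / (x * r) / r = (1 - x\<^sup>2) / (x * y)" using ss by (simp add: field_simps)
    also have "\<dots> + x / y = (1 - x\<^sup>2 + x\<^sup>2) / (x * y)" using x yp by (simp add: field_simps power2_eq_square)
    finally show ?thesis by simp
  qed
  have rr: "(1 / x\<^sup>2) * (1 / x) / (1 / x\<^sup>2 + 1) = 1 / (x * y)" using x yp
    by (simp add: y_def field_simps power2_eq_square)
  show ?thesis unfolding p sqrt_inv_sq[OF x] y_def[symmetric] unfolding r_def[symmetric] using l rr by fastforce
qed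

lemma gen_b: assumes x: "x > 0"
  shows "B * (1 / (x\<^sup>2 + 1)) powr (3/2) + x / (x\<^sup>2 + 1)
    = B * ((1/x\<^sup>2) / (1/x\<^sup>2 + 1)) * sqrt ((1/x\<^sup>2) / (1/x\<^sup>2 + 1)) + sqrt (1/x\<^sup>2) / (1/x\<^sup>2 + 1)"
proof -
  have e: "(1/x\<^sup>2) / (1/x\<^sup>2 + 1) = 1 / (x\<^sup>2 + 1)" using x by (simp add: field_simps)
  have e2: "(1/x) / (1/x\<^sup>2 + 1) = x / (x\<^sup>2 + 1)" using x by (simp add: field_simps power2_eq_square)
  have s: "sqrt (x\<^sup>2 + 1) > 0" using sqp1[of x] by simp
  show ?thesis unfolding e sqrt_inv_sq[OF x] e2 using x s by (simp add: powr_32_w real_sqrt_divide)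
qed



lemma frac_le_cross: "b > 0 \<Longrightarrow> d > 0 \<Longrightarrow> a * d \<le> c * b \<Longrightarrow> a / b \<le> c / (d::real)"
  by (simp add: pos_divide_le_eq pos_le_divide_eq)

definition phi :: "real \<Rightarrow> real" where "phi x = x + 4 / (x + 1)"

lemma phi_mono: assumes "x < y" "x > -1" "(x + 1) * (y + 1) > 4"
  shows "phi x < phi y"
proof -
  have xp: "x + 1 > 0" using assms by simp
  have yp: "y + 1 > 0" using assms by simp
  have d0: "4 / (y + 1) - 4 / (x + 1) = (4 * (x + 1) - 4 * (y + 1)) / ((y + 1) * (x + 1))"
    using xp yp by (simp add: diff_frac_eq)
  have d: "4 / (y + 1) - 4 / (x + 1) = - ((y - x) * (4 / ((x + 1) * (y + 1))))"
    unfolding d0 by argo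
  have "phi y - phi x = (y - x) * (1 - 4 / ((x + 1) * (y + 1)))"
    unfolding phi_def using d by (simp add: algebra_simps)
  moreover have "4 / ((x + 1) * (y + 1)) < 1" using assms(3) by simp
  ultimately have "(y - x) * (1 - 4 / ((x + 1) * (y + 1))) > 0" using assms(1) by (intro mult_pos_pos) auto
  thus ?thesis using \<open>phi y - phi x = _\<close> by linarith
qed

lemma step_rel:
  fixes P Q :: real
  assumes Q1: "Q \<ge> 1" and P0: "P > 0"
    and eq: "(P - 1) / sqrt (P + 1) = Q * sqrt Q / (Q + 1)"
  shows "P > 1" "P \<le> Q + 1" "P \<ge> Q + 1/2" "P \<ge> Q + 1 - 4 / (P + 1)"
proof -
  have sP: "sqrt (P + 1) > 0" using P0 by simp
  have rpos: "Q * sqrt Q / (Q + 1) > 0" using Q1 by simp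
  then show P1: "P > 1" using eq sP by (smt (verit) divide_nonpos_pos)
  have "((P - 1) / sqrt (P + 1))\<^sup>2 = (Q * sqrt Q / (Q + 1))\<^sup>2" using eq by simp
  hence sq: "(P - 1)\<^sup>2 / (P + 1) = Q ^ 3 / (Q + 1)\<^sup>2"
    using P0 Q1 by (simp add: power_divide power_mult_distrib power2_eq_square[of "sqrt Q"] power3_eq_cube) (simp add: power2_eq_square)
  have E: "phi P = Q + 1 + (3 * Q + 2) / (Q + 1)\<^sup>2"
  proof -
    have l: "(P - 1)\<^sup>2 / (P + 1) = P - 3 + 4 / (P + 1)" using P0
      by (simp add: field_simps power2_eq_square)
    have qq: "(Q + 1)\<^sup>2 > 0" using Q1 by simp
    have "Q ^ 3 = (Q - 2) * (Q + 1)\<^sup>2 + (3 * Q + 2)" by algebra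
    hence "Q ^ 3 / (Q + 1)\<^sup>2 = ((Q - 2) * (Q + 1)\<^sup>2 + (3 * Q + 2)) / (Q + 1)\<^sup>2" by simp
    also have "\<dots> = Q - 2 + (3 * Q + 2) / (Q + 1)\<^sup>2" using qq by (simp add: add_divide_distrib)
    finally have r: "Q ^ 3 / (Q + 1)\<^sup>2 = Q - 2 + (3 * Q + 2) / (Q + 1)\<^sup>2" .
    show ?thesis using sq l r unfolding phi_def by simp
  qed
  show "P \<le> Q + 1"
  proof (rule ccontr)
    assume "\<not> P \<le> Q + 1"
    hence PQ: "P > Q + 1" by simp
    have "(Q + 1 + 1) * (P + 1) \<ge> 3 * 3" using Q1 PQ by (intro mult_mono) auto
    hence "phi (Q + 1) < phi P" using Q1 PQ by (intro phi_mono) auto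
    moreover have "(3 * Q + 2) / (Q + 1)\<^sup>2 \<le> 4 / (Q + 2)"
    proof (rule frac_le_cross)
      show "(Q + 1)\<^sup>2 > 0" "Q + 2 > 0" using Q1 by auto
      show "(3 * Q + 2) * (Q + 2) \<le> 4 * (Q + 1)\<^sup>2" by (simp add: algebra_simps power2_eq_square)
    qed
    ultimately show False using E unfolding phi_def by (simp add: add.commute)
  qed
  show "P \<ge> Q + 1/2"
  proof (rule ccontr)
    assume "\<not> P \<ge> Q + 1/2"
    hence PQ: "P < Q + 1/2" by simp
    have m5: "(P + 1) * (Q + 1/2 + 1) \<ge> 2 * (5/2)" using Q1 P1 by (intro mult_mono) auto
    have k4: "(4::real) < 2 * (5/2)" by simp
    from less_le_trans[OF k4 m5] have pr: "(P + 1) * (Q + 1/2 + 1) > 4" .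
    have Pm: "P > -1" using P1 by simp
    have "phi P < phi (Q + 1/2)" using phi_mono[OF PQ Pm pr] .
    moreover have "phi (Q + 1/2) = Q + 1/2 + 4 / (Q + 3/2)" unfolding phi_def by (simp add: algebra_simps)
    moreover have "4 / (Q + 3/2) \<le> 1/2 + (3 * Q + 2) / (Q + 1)\<^sup>2"
    proof -
      have qp: "(Q + 1)\<^sup>2 > 0" using Q1 by simp
      have "1/2 + (3 * Q + 2) / (Q + 1)\<^sup>2 = ((Q + 1)\<^sup>2 + 2 * (3 * Q + 2)) / (2 * (Q + 1)\<^sup>2)"
        using qp by (simp add: field_simps)
      moreover have "4 / (Q + 3/2) \<le> ((Q + 1)\<^sup>2 + 2 * (3 * Q + 2)) / (2 * (Q + 1)\<^sup>2)"
      proof (rule frac_le_cross)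
        show "Q + 3/2 > 0" "2 * (Q + 1)\<^sup>2 > 0" using Q1 by auto
        have c3: "Q ^ 3 \<ge> 1" "Q\<^sup>2 \<ge> 1" using Q1 by (auto simp: one_le_power)
        have "((Q + 1)\<^sup>2 + 2 * (3 * Q + 2)) * (Q + 3/2) = Q^3 + 19/2 * Q\<^sup>2 + 17 * Q + 15/2"
          by (simp add: algebra_simps power2_eq_square power3_eq_cube)
        moreover have "4 * (2 * (Q + 1)\<^sup>2) = 8 * Q\<^sup>2 + 16 * Q + 8"
          by (simp add: algebra_simps power2_eq_square)
        ultimately show "4 * (2 * (Q + 1)\<^sup>2) \<le> ((Q + 1)\<^sup>2 + 2 * (3 * Q + 2)) * (Q + 3/2)"
          using c3 Q1 by linarith
      qed
      ultimately show ?thesis by simp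
    qed
    ultimately show False using E by linarith
  qed
  show "P \<ge> Q + 1 - 4 / (P + 1)"
  proof -
    have "(3 * Q + 2) / (Q + 1)\<^sup>2 \<ge> 0" using Q1 by simp
    thus ?thesis using E unfolding phi_def by simp
  qed
qed



lemma D1_id:
  fixes r s :: real
  assumes r: "r > 0" and s: "s > 0" and rs: "s\<^sup>2 = r\<^sup>2 + 1"
  shows "r * (r\<^sup>2 / s\<^sup>2) * (r / s) / 2 + r / s\<^sup>2 - s / 2 = (2 * r * s - 2 * r\<^sup>2 - 1) / (2 * s ^ 3)"
proof -
  have e1: "r * (r\<^sup>2 / s\<^sup>2) * (r / s) / 2 = (r\<^sup>2)\<^sup>2 / (2 * s ^ 3)"
    by (simp add: power2_eq_square power3_eq_cube)
  have e2: "r / s\<^sup>2 = (2 * r * s) / (2 * s ^ 3)" using s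
    by (simp add: power2_eq_square power3_eq_cube)
  have e3: "s / 2 = (s\<^sup>2)\<^sup>2 / (2 * s ^ 3)" using s
    by (simp add: power2_eq_square power3_eq_cube)
  have "r * (r\<^sup>2 / s\<^sup>2) * (r / s) / 2 + r / s\<^sup>2 - s / 2 = ((r\<^sup>2)\<^sup>2 + 2 * r * s - (s\<^sup>2)\<^sup>2) / (2 * s ^ 3)"
    unfolding e1 e2 e3 by (simp add: add_divide_distrib diff_divide_distrib)
  also have "\<dots> = (2 * r * s - 2 * r\<^sup>2 - 1) / (2 * s ^ 3)" unfolding rs
    by (simp add: algebra_simps power2_eq_square)
  finally show ?thesis .
qed

lemma D1_bounds:
  fixes r s :: real
  assumes r: "r > 0" and s: "s > 0" and rs: "s\<^sup>2 = r\<^sup>2 + 1"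
  shows "0 \<le> 2 * r * s - 2 * r\<^sup>2" "2 * r * s - 2 * r\<^sup>2 \<le> 1"
proof -
  have "r\<^sup>2 \<le> s\<^sup>2" using rs by simp
  hence "r \<le> s" by (rule power2_le_imp_le) (use s in auto)
  hence "r * r \<le> r * s" using r by (simp add: mult_left_mono)
  thus "0 \<le> 2 * r * s - 2 * r\<^sup>2" by (simp add: power2_eq_square)
  have "(2 * r * s)\<^sup>2 \<le> (2 * r\<^sup>2 + 1)\<^sup>2"
  proof -
    have "(2 * r * s)\<^sup>2 = 4 * r\<^sup>2 * s\<^sup>2" by (simp add: power2_eq_square)
    also have "\<dots> = 4 * r\<^sup>2 * (r\<^sup>2 + 1)" using rs by simp
    also have "\<dots> \<le> (2 * r\<^sup>2 + 1)\<^sup>2" by (simp add: algebra_simps power2_eq_square)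
    finally show ?thesis .
  qed
  hence "2 * r * s \<le> 2 * r\<^sup>2 + 1" by (rule power2_le_imp_le) simp
  thus "2 * r * s - 2 * r\<^sup>2 \<le> 1" by simp
qed

lemma delta_bound:
  fixes P Q B :: real
  assumes Q1: "Q \<ge> 1" and PQ1: "P \<le> Q + 1" and PQ2: "P \<ge> Q" and PQ3: "P \<ge> Q + 1 - 4 / (P + 1)"
  shows "\<bar>B * (Q / (Q + 1)) * sqrt (Q / (Q + 1)) + sqrt Q / (Q + 1) - sqrt P / 2\<bar>
       \<le> \<bar>B - sqrt Q / 2\<bar> + 2 / ((Q + 1) * sqrt (Q + 1))"
proof -
  define r where "r = sqrt Q"
  define s where "s = sqrt (Q + 1)"
  have r: "r > 0" using Q1 by (simp add: r_def)
  have s: "s > 0" using Q1 by (simp add: s_def)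
  have r2: "r\<^sup>2 = Q" using Q1 by (simp add: r_def)
  have s2: "s\<^sup>2 = Q + 1" using Q1 by (simp add: s_def)
  have rs: "s\<^sup>2 = r\<^sup>2 + 1" using r2 s2 by simp
  have s3: "s ^ 3 = (Q + 1) * sqrt (Q + 1)" using s2 unfolding s_def[symmetric]
    by (simp add: power3_eq_cube power2_eq_square)
  define w where "w = Q / (Q + 1)"
  have w0: "w \<ge> 0" "w \<le> 1" using Q1 by (auto simp: w_def)
  have sw: "sqrt w = r / s" unfolding w_def r_def s_def by (simp add: real_sqrt_divide)
  have ww: "w = r\<^sup>2 / s\<^sup>2" using r2 s2 by (simp add: w_def)
  have wsw: "\<bar>w * sqrt w\<bar> \<le> 1" using w0 by (simp add: mult_le_one)
  define e where "e = B - sqrt Q / 2"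
  define K where "K = w * sqrt w"
  define D1 where "D1 = r * K / 2 + r / s\<^sup>2 - s / 2"
  define D2 where "D2 = (s - sqrt P) / 2"
  have qr: "sqrt Q / (Q + 1) = r / s\<^sup>2" using s2 r_def by simp
  have main: "B * w * sqrt w + sqrt Q / (Q + 1) - sqrt P / 2 = e * K + D1 + D2"
    unfolding qr unfolding e_def D1_def D2_def K_def r_def[symmetric] by (simp add: field_simps)
  have KK: "K = (r\<^sup>2 / s\<^sup>2) * (r / s)" unfolding K_def using ww sw by simp
  have D1b: "- (1 / (2 * s ^ 3)) \<le> D1" "D1 \<le> 0"
  proof -
    have d: "D1 = (2 * r * s - 2 * r\<^sup>2 - 1) / (2 * s ^ 3)" unfolding D1_def KK using D1_id[OF r s rs]
      by (simp add: mult.assoc)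
    have b1: "-1 \<le> 2 * r * s - 2 * r\<^sup>2 - 1" "2 * r * s - 2 * r\<^sup>2 - 1 \<le> 0" using D1_bounds[OF r s rs] by auto
    have sp: "2 * s ^ 3 > 0" using s by simp
    show "D1 \<le> 0" unfolding d using b1 sp by (simp add: divide_nonpos_pos)
    have "-1 / (2 * s ^ 3) \<le> (2 * r * s - 2 * r\<^sup>2 - 1) / (2 * s ^ 3)"
      by (rule divide_right_mono) (use b1 sp in auto)
    thus "- (1 / (2 * s ^ 3)) \<le> D1" unfolding d by simp
  qed
  have D2b: "0 \<le> D2" "D2 \<le> 2 / s ^ 3"
  proof -
    have P0: "P \<ge> 0" using PQ2 Q1 by simp
    have sP: "sqrt P \<le> s" unfolding s_def using PQ1 by simp
    thus "0 \<le> D2" unfolding D2_def by simp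
    have spp: "s + sqrt P > 0" using s P0 by (simp add: add_pos_nonneg)
    have "(s - sqrt P) * (s + sqrt P) = s\<^sup>2 - (sqrt P)\<^sup>2" by (simp add: algebra_simps power2_eq_square)
    also have "\<dots> = Q + 1 - P" using s2 P0 by simp
    finally have "s - sqrt P = (Q + 1 - P) / (s + sqrt P)" using spp by (simp add: eq_divide_eq)
    also have "\<dots> \<le> (Q + 1 - P) / s"
      by (rule divide_left_mono) (use s P0 PQ1 spp in auto)
    also have "\<dots> \<le> (4 / (Q + 1)) / s"
    proof (rule divide_right_mono)
      have "4 / (P + 1) \<le> 4 / (Q + 1)" by (rule divide_left_mono) (use PQ2 Q1 in auto)
      thus "Q + 1 - P \<le> 4 / (Q + 1)" using PQ3 by simp
    qed (use s in simp)
    also have "\<dots> = 4 / s ^ 3" using s2[symmetric] s by (simp add: power3_eq_cube power2_eq_square)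
    finally show "D2 \<le> 2 / s ^ 3" unfolding D2_def by simp
  qed
  have "\<bar>e * K\<bar> \<le> \<bar>e\<bar>" using wsw unfolding K_def by (simp add: abs_mult mult_left_le)
  moreover have "1 / (2 * s ^ 3) \<le> 2 / s ^ 3" using s by (simp add: divide_simps)
  ultimately have "\<bar>e * K + D1 + D2\<bar> \<le> \<bar>e\<bar> + 2 / s ^ 3" using D1b D2b by (simp add: abs_le_iff)
  thus ?thesis using main unfolding w_def e_def s3 by simp
qed



lemma tel1:
  fixes y :: real assumes y: "y \<ge> 1"
  shows "2 / (y * sqrt y) \<le> 8 * (1 / sqrt (y - 1/2) - 1 / sqrt y)"
proof -
  define u where "u = sqrt y"
  define v where "v = sqrt (y - 1/2)"
  have u: "u > 0" using y by (simp add: u_def)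
  have v: "v > 0" using y by (simp add: v_def)
  have vu: "v \<le> u" using y by (simp add: u_def v_def)
  have u2: "u\<^sup>2 = y" using y by (simp add: u_def)
  have v2: "v\<^sup>2 = y - 1/2" using y by (simp add: v_def)
  have uv: "(u - v) * (u + v) = 1/2" using u2 v2 by (simp add: algebra_simps power2_eq_square)
  have uvp: "u + v > 0" using u v by simp
  have "u - v = 1 / (2 * (u + v))" using uv uvp by (simp add: field_simps)
  also have "\<dots> \<ge> 1 / (4 * u)" using vu u v by (simp add: frac_le_cross)
  finally have d: "u - v \<ge> 1 / (4 * u)" .
  have e: "1 / v - 1 / u = (u - v) / (u * v)" using u v by (simp add: field_simps)
  have a2: "(1 / (4 * u)) / (u * v) \<le> (u - v) / (u * v)" by (rule divide_right_mono) (use d u v in auto)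
  have a1: "(1 / (4 * u)) / (u * u) \<le> (1 / (4 * u)) / (u * v)"
    by (rule divide_left_mono) (use u v vu in \<open>auto intro: mult_left_mono\<close>)
  have k: "1 / v - 1 / u \<ge> 1 / (4 * (u * u * u))" using a1 a2 e by (simp add: mult.assoc)
  have ys: "y * sqrt y = u * u * u" using u2 by (simp add: u_def power2_eq_square)
  have "2 / (y * sqrt y) = 8 * (1 / (4 * (u * u * u)))" unfolding ys by simp
  also have "\<dots> \<le> 8 * (1 / v - 1 / u)" using k by simp
  finally show ?thesis unfolding u_def v_def .
qed

lemma tel2:
  fixes m :: real assumes m: "m \<ge> 0"
  shows "8 / (m + 2) \<le> 16 * (sqrt (m + 2) - sqrt (m + 1))"
proof -
  define u where "u = sqrt (m + 2)"
  define v where "v = sqrt (m + 1)"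
  have u: "u \<ge> 1" using m by (simp add: u_def)
  have v: "v > 0" using m by (simp add: v_def)
  have vu: "v \<le> u" using m by (simp add: u_def v_def)
  have u2: "u\<^sup>2 = m + 2" using m by (simp add: u_def)
  have v2: "v\<^sup>2 = m + 1" using m by (simp add: v_def)
  have uv: "(u - v) * (u + v) = 1" using u2 v2 by (simp add: algebra_simps power2_eq_square)
  have uvp: "u + v > 0" using u v by simp
  have "u - v = 1 / (u + v)" using uv uvp by (simp add: field_simps)
  also have "\<dots> \<ge> 1 / (2 * u)" using vu u v by (simp add: frac_le_cross)
  finally have d: "u - v \<ge> 1 / (2 * u)" .
  have "8 / (m + 2) = 8 / (u * u)" using u2 by (simp add: power2_eq_square)
  also have "\<dots> \<le> 8 / u" using u by (simp add: divide_simps)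
  also have "\<dots> = 16 * (1 / (2 * u))" by simp
  also have "\<dots> \<le> 16 * (u - v)" using d by simp
  finally show ?thesis unfolding u_def v_def .
qed



lemma Astep: fixes A z d r :: real
  assumes "A \<le> 1" "1 - z \<le> r" "r \<le> 1" "z \<ge> 0" "z \<le> d"
  shows "A - d \<le> A * r"
proof (cases "A \<ge> 0")
  case True
  have "A * (1 - z) \<le> A * r" using True assms by (intro mult_left_mono) auto
  moreover have "A * z \<le> 1 * z" using True assms by (intro mult_right_mono) auto
  ultimately show ?thesis using assms by (simp add: algebra_simps)
next
  case False
  have "A * 1 \<le> A * r" using False assms by (intro mult_left_mono_neg) auto
  thus ?thesis using assms by simp
qed

locale kyle =
  fixes N :: nat and a b c :: "nat \<Rightarrow> real"
  assumes N2: "N \<ge> 2"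
    and cpos: "\<And>n. 1 \<le> n \<Longrightarrow> n \<le> N \<Longrightarrow> c n > 0"
    and aterm: "a (N - 1) = 0"
    and bterm: "b (N - 1) = 1/2"
    and arec: "\<And>n. 1 \<le> n \<Longrightarrow> n \<le> N - 1 \<Longrightarrow>
       a (n - 1) = a n * (1 / ((c n)\<^sup>2 + 1)) powr (1/2)
                    + b n * (1 / ((c n)\<^sup>2 + 1)) powr (3/2) * (c n)\<^sup>2"
    and brec: "\<And>n. 1 \<le> n \<Longrightarrow> n \<le> N - 1 \<Longrightarrow>
       b (n - 1) = b n * (1 / ((c n)\<^sup>2 + 1)) powr (3/2)
                    + c n / ((c n)\<^sup>2 + 1)"
    and abrel: "\<And>n. 1 \<le> n \<Longrightarrow> n \<le> N - 1 \<Longrightarrow>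
       a n + b n = (1 - (c n)\<^sup>2) / (c n * (1 + (c n)\<^sup>2) powr (1/2))"
begin

definition q :: "nat \<Rightarrow> real" where "q n = 1 / (c n)\<^sup>2"

lemma qpos: "1 \<le> n \<Longrightarrow> n \<le> N \<Longrightarrow> q n > 0"
  using cpos[of n] by (simp add: q_def)

lemma c_q: "1 \<le> n \<Longrightarrow> n \<le> N \<Longrightarrow> c n = 1 / sqrt (q n)"
  using cpos[of n] by (simp add: q_def real_sqrt_divide)

lemma s_eq: "1 \<le> n \<Longrightarrow> n \<le> N - 1 \<Longrightarrow> a n + b n = (q n - 1) / sqrt (q n + 1)"
  using abrel[of n] gen_s[of "c n"] cpos[of n] by (simp add: q_def)

lemma s_prev: assumes "1 \<le> n" "n \<le> N - 1"
  shows "a (n - 1) + b (n - 1) = q n * sqrt (q n) / (q n + 1)"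
proof -
  have cp: "c n > 0" using assms cpos[of n] by simp
  have "a (n - 1) + b (n - 1) = (a n + b n) / sqrt ((c n)\<^sup>2 + 1) + c n / ((c n)\<^sup>2 + 1)"
    using arec[OF assms] brec[OF assms] gen_prev[OF cp, of "a n" "b n"] by simp
  also have "\<dots> = (1 / (c n)\<^sup>2) * sqrt (1 / (c n)\<^sup>2) / (1 / (c n)\<^sup>2 + 1)"
    using abrel[OF assms] gen_prev2[OF cp] by simp
  finally show ?thesis by (simp add: q_def)
qed

lemma b_prev: assumes "1 \<le> n" "n \<le> N - 1"
  shows "b (n - 1) = b n * (q n / (q n + 1)) * sqrt (q n / (q n + 1)) + sqrt (q n) / (q n + 1)"
proof -
  have cp: "c n > 0" using assms cpos[of n] by simp
  show ?thesis using brec[OF assms] gen_b[OF cp, of "b n"] by (simp add: q_def)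
qed

lemma step_eq: assumes "2 \<le> n" "n \<le> N - 1"
  shows "(q (n - 1) - 1) / sqrt (q (n - 1) + 1) = q n * sqrt (q n) / (q n + 1)"
  using s_eq[of "n - 1"] s_prev[of n] assms by simp

lemma base: "1 \<le> q (N - 1)" "q (N - 1) \<le> 2"
proof -
  have N1: "1 \<le> N - 1" "N - 1 \<le> N - 1" using N2 by auto
  define P where "P = q (N - 1)"
  have P0: "P > 0" using qpos[of "N - 1"] N2 by (simp add: P_def)
  have "(P - 1) / sqrt (P + 1) = a (N - 1) + b (N - 1)" using s_eq[OF N1] by (simp add: P_def)
  hence eq: "(P - 1) / sqrt (P + 1) = 1/2" using aterm bterm by simp
  have sp: "sqrt (P + 1) > 0" using P0 by simp
  have Pe: "P - 1 = sqrt (P + 1) / 2" using eq sp by (simp add: field_simps)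
  hence P1: "P > 1" using sp by linarith
  from Pe have "(P - 1)\<^sup>2 = (sqrt (P + 1) / 2)\<^sup>2" by (rule arg_cong)
  also have "\<dots> = (P + 1) / 4" using P0 by (simp add: power_divide)
  finally have "(P - 1)\<^sup>2 = (P + 1) / 4" .
  moreover have "(P - 2) * (P - 1/4) + 1/4 = (P - 1)\<^sup>2 - (P + 1) / 4"
    by (simp add: field_simps power2_eq_square)
  ultimately have "(P - 2) * (P - 1/4) + 1/4 = 0" by simp
  hence "P \<le> 2"
  proof -
    assume h: "(P - 2) * (P - 1/4) + 1/4 = 0"
    show "P \<le> 2"
    proof (rule ccontr)
      assume "\<not> P \<le> 2"
      hence "(P - 2) * (P - 1/4) > 0" by (intro mult_pos_pos) auto
      thus False using h by linarith
    qed
  qed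
  thus "1 \<le> q (N - 1)" "q (N - 1) \<le> 2" using P1 by (auto simp: P_def)
qed


definition M :: "nat \<Rightarrow> real" where "M n = real N - real n"

definition Inv :: "nat \<Rightarrow> bool" where
  "Inv n \<longleftrightarrow> 1 \<le> q n \<and> (M n + 1) / 2 \<le> q n \<and> q n \<le> M n + 1
     \<and> M n - 16 * sqrt (M n + 1) \<le> q n
     \<and> \<bar>b n - sqrt (q n) / 2\<bar> + 8 / sqrt ((M n + 1) / 2) \<le> 17 / 2"

lemma Inv_base: "Inv (N - 1)"
proof -
  have M1: "M (N - 1) = 1" using N2 by (simp add: M_def of_nat_diff)
  have q1: "1 \<le> q (N - 1)" "q (N - 1) \<le> 2" using base by auto
  have sq: "1 \<le> sqrt (q (N - 1))" "sqrt (q (N - 1)) \<le> 2"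
  proof -
    show "1 \<le> sqrt (q (N - 1))" using q1 by simp
    have "sqrt (q (N - 1)) \<le> sqrt 4" using q1 by (subst real_sqrt_le_iff) simp
    thus "sqrt (q (N - 1)) \<le> 2" by simp
  qed
  have "\<bar>b (N - 1) - sqrt (q (N - 1)) / 2\<bar> \<le> 1/2" using bterm sq by (simp add: abs_le_iff)
  moreover have "1 - 16 * sqrt 2 \<le> q (N - 1)" using q1 by (smt (verit) real_sqrt_ge_zero)
  ultimately show ?thesis unfolding Inv_def M1 using q1 by simp
qed

lemma Inv_step: assumes n2: "2 \<le> n" and nN: "n \<le> N - 1" and I: "Inv n"
  shows "Inv (n - 1)"
proof -
  define Q where "Q = q n"
  define P where "P = q (n - 1)"
  define m where "m = M n"
  have Mn: "M (n - 1) = m + 1" using n2 by (simp add: M_def m_def of_nat_diff)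
  have Q1: "Q \<ge> 1" and Qlo: "(m + 1) / 2 \<le> Q" and Qhi: "Q \<le> m + 1"
    and Qlo2: "m - 16 * sqrt (m + 1) \<le> Q"
    and eb: "\<bar>b n - sqrt Q / 2\<bar> + 8 / sqrt ((m + 1) / 2) \<le> 17 / 2"
    using I unfolding Inv_def Q_def m_def by auto
  have m1: "m \<ge> 1" using nN N2 by (simp add: m_def M_def)
  have P0: "P > 0" using qpos[of "n - 1"] n2 nN by (simp add: P_def)
  have eq: "(P - 1) / sqrt (P + 1) = Q * sqrt Q / (Q + 1)"
    using step_eq[OF n2 nN] by (simp add: P_def Q_def)
  note st = step_rel[OF Q1 P0 eq]
  have P1: "1 \<le> P" using st(1) by simp
  have Plo: "(m + 1 + 1) / 2 \<le> P" using st(3) Qlo by simp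
  have Phi: "P \<le> m + 1 + 1" using st(2) Qhi by simp
  have Plo2: "m + 1 - 16 * sqrt (m + 1 + 1) \<le> P"
  proof -
    have "4 / (P + 1) \<le> 8 / (m + 2)"
    proof -
      have "4 / (P + 1) \<le> 4 / ((m + 2) / 2)"
        by (rule divide_left_mono) (use Plo m1 in auto)
      thus ?thesis by simp
    qed
    moreover have "8 / (m + 2) \<le> 16 * (sqrt (m + 2) - sqrt (m + 1))" using tel2[of m] m1 by simp
    ultimately show ?thesis using st(4) Qlo2 by (simp add: algebra_simps)
  qed
  have ebP: "\<bar>b (n - 1) - sqrt P / 2\<bar> + 8 / sqrt ((m + 1 + 1) / 2) \<le> 17 / 2"
  proof -
    have bp: "b (n - 1) = b n * (Q / (Q + 1)) * sqrt (Q / (Q + 1)) + sqrt Q / (Q + 1)"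
      using b_prev[of n] n2 nN by (simp add: Q_def)
    have PQ: "P \<ge> Q" using st(3) by simp
    have d: "\<bar>b (n - 1) - sqrt P / 2\<bar> \<le> \<bar>b n - sqrt Q / 2\<bar> + 2 / ((Q + 1) * sqrt (Q + 1))"
      unfolding bp using delta_bound[OF Q1 st(2) PQ st(4)] .
    define y where "y = (m + 2) / 2"
    have y1: "y \<ge> 1" using m1 by (simp add: y_def)
    have yQ: "y \<le> Q + 1" using Qlo by (simp add: y_def)
    have "2 / ((Q + 1) * sqrt (Q + 1)) \<le> 2 / (y * sqrt y)"
    proof (rule divide_left_mono)
      show "y * sqrt y \<le> (Q + 1) * sqrt (Q + 1)" using yQ y1 by (intro mult_mono) auto
      show "0 < (Q + 1) * sqrt (Q + 1) * (y * sqrt y)" using y1 Q1 by simp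
    qed simp
    also have "\<dots> \<le> 8 * (1 / sqrt (y - 1/2) - 1 / sqrt y)" using tel1[OF y1] .
    also have "8 * (1 / sqrt (y - 1/2) - 1 / sqrt y) = 8 / sqrt ((m + 1) / 2) - 8 / sqrt ((m + 1 + 1) / 2)"
    proof -
      have ya: "y - 1/2 = (m + 1) / 2" and yb: "y = (m + 1 + 1) / 2" by (simp_all add: y_def field_simps)
      show ?thesis unfolding ya unfolding yb by (simp add: right_diff_distrib)
    qed
    finally have "2 / ((Q + 1) * sqrt (Q + 1)) \<le> 8 / sqrt ((m + 1) / 2) - 8 / sqrt ((m + 1 + 1) / 2)" .
    thus ?thesis using d eb by linarith
  qed
  show ?thesis unfolding Inv_def Mn using P1 Plo Phi Plo2 ebP by (simp add: P_def)
qed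

lemma Inv_all_aux: "k \<le> N - 2 \<Longrightarrow> Inv (N - 1 - k)"
proof (induction k)
  case 0
  then show ?case using Inv_base by simp
next
  case (Suc k)
  have "Inv (N - 1 - k)" using Suc by simp
  moreover have "2 \<le> N - 1 - k" "N - 1 - k \<le> N - 1" using Suc.prems by auto
  ultimately have "Inv (N - 1 - k - 1)" by (rule Inv_step[rotated 2])
  thus ?case by (simp add: diff_diff_add)
qed

lemma Inv_all: "1 \<le> n \<Longrightarrow> n \<le> N - 1 \<Longrightarrow> Inv n"
  using Inv_all_aux[of "N - 1 - n"] by simp


lemma qstep: assumes "2 \<le> n" "n \<le> N - 1"
  shows "q (n - 1) \<le> q n + 1" "q (n - 1) \<ge> q n + 1 - 4 / (q (n - 1) + 1)"
proof -
  have Q1: "q n \<ge> 1" using Inv_all[of n] assms unfolding Inv_def by auto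
  have P0: "q (n - 1) > 0" using qpos[of "n - 1"] assms by simp
  note st = step_rel[OF Q1 P0 step_eq[OF assms]]
  show "q (n - 1) \<le> q n + 1" "q (n - 1) \<ge> q n + 1 - 4 / (q (n - 1) + 1)" using st by auto
qed

lemma Sigma_Suc: assumes "Suc k \<le> N"
  shows "Sigma S0 c (Suc k) = Sigma S0 c k * (q (Suc k) / (q (Suc k) + 1))"
proof -
  have cp: "c (Suc k) > 0" using cpos[of "Suc k"] assms by simp
  have "1 + (c (Suc k))\<^sup>2 = (q (Suc k) + 1) / q (Suc k)" using cp by (simp add: q_def field_simps)
  thus ?thesis using cp by (simp add: q_def)
qed

definition A :: "nat \<Rightarrow> real" where "A n = 1 - 16 / (M n + 3) + 16 / (real N + 2)"

lemma Sig_inv_aux: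
  assumes S0: "S0 > 0"
  shows "k + 1 \<le> N - 1 \<Longrightarrow> S0 * q (k + 1) / (q 1 + 1) * A (k + 1) \<le> Sigma S0 c (k + 1)
     \<and> Sigma S0 c (k + 1) \<le> S0 * q (k + 1) / (q 1 + 1)"
proof (induction k)
  case 0
  have "Sigma S0 c 1 = S0 * (q 1 / (q 1 + 1))" using Sigma_Suc[of 0] N2 by simp
  moreover have "A 1 = 1" using N2 by (simp add: A_def M_def of_nat_diff)
  ultimately show ?case by simp
next
  case (Suc k)
  define n where "n = k + 1"
  have nN: "n + 1 \<le> N - 1" using Suc.prems by (simp add: n_def)
  have IH: "S0 * q n / (q 1 + 1) * A n \<le> Sigma S0 c n" "Sigma S0 c n \<le> S0 * q n / (q 1 + 1)"
    using Suc.IH nN by (auto simp: n_def)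
  define Q where "Q = q n"
  define Q' where "Q' = q (n + 1)"
  define m where "m = M n"
  have st: "Q \<le> Q' + 1" "Q \<ge> Q' + 1 - 4 / (Q + 1)"
    using qstep[of "n + 1"] nN by (auto simp: Q_def Q'_def n_def)
  have In: "Inv n" "Inv (n + 1)" using Inv_all nN by (auto simp: n_def)
  have Mn1: "M (n + 1) = m - 1" by (simp add: M_def m_def)
  have Qlo: "(m + 1) / 2 \<le> Q" using In(1) unfolding Inv_def Q_def m_def by auto
  have Q'lo: "m / 2 \<le> Q'" "Q' \<ge> 1" using In(2) unfolding Inv_def Q'_def Mn1 by auto
  have mN: "m + 3 \<le> real N + 2" "m \<ge> 2" using nN by (auto simp: m_def M_def n_def)
  have q1p: "q 1 + 1 > 0" using qpos[of 1] N2 by simp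
  have Sg: "Sigma S0 c (n + 1) = Sigma S0 c n * (Q' / (Q' + 1))"
    using Sigma_Suc[of n] nN by (simp add: Q'_def)
  have Fp: "Q' / (Q' + 1) \<ge> 0" using Q'lo by simp
  have up: "Sigma S0 c (n + 1) \<le> S0 * Q' / (q 1 + 1)"
  proof -
    have "Sigma S0 c (n + 1) \<le> S0 * Q / (q 1 + 1) * (Q' / (Q' + 1))"
      unfolding Sg Q_def by (rule mult_right_mono[OF IH(2) Fp])
    also have "\<dots> \<le> S0 * (Q' + 1) / (q 1 + 1) * (Q' / (Q' + 1))"
      using st(1) S0 q1p Fp by (intro mult_right_mono divide_right_mono mult_left_mono) auto
    also have "\<dots> = S0 * Q' / (q 1 + 1)"
    proof -
      have "Q' + 1 > 0" using Q'lo by simp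
      thus ?thesis by auto
    qed
    finally show ?thesis .
  qed
  define r where "r = Q / (Q' + 1)"
  define z where "z = 4 / ((Q + 1) * (Q' + 1))"
  have Q'p: "Q' + 1 > 0" using Q'lo by simp
  have Qp: "Q + 1 > 0" using Qlo mN by simp
  have r1: "r \<le> 1" using st(1) Q'p by (simp add: r_def)
  have r2: "1 - z \<le> r"
  proof -
    have "(Q' + 1 - 4 / (Q + 1)) / (Q' + 1) \<le> Q / (Q' + 1)"
      by (rule divide_right_mono) (use st(2) Q'p in auto)
    moreover have "(Q' + 1 - 4 / (Q + 1)) / (Q' + 1) = 1 - z" unfolding z_def using Q'p Qp
      by (simp add: diff_divide_distrib divide_divide_eq_left)
    ultimately show ?thesis by (simp add: r_def)
  qed
  have z0: "z \<ge> 0" using Qp Q'p by (simp add: z_def)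
  have zd: "z \<le> 16 / ((m + 2) * (m + 3))"
  proof -
    have "(m + 2) * (m + 3) / 4 \<le> (Q + 1) * (Q' + 1)"
    proof -
      have "(m + 3) / 2 \<le> Q + 1" "(m + 2) / 2 \<le> Q' + 1" using Qlo Q'lo by auto
      hence "(m + 3) / 2 * ((m + 2) / 2) \<le> (Q + 1) * (Q' + 1)"
        using mN by (intro mult_mono) auto
      thus ?thesis by (simp add: algebra_simps)
    qed
    hence "4 / ((Q + 1) * (Q' + 1)) \<le> 4 / ((m + 2) * (m + 3) / 4)"
      by (rule divide_left_mono) (use mN Qp Q'p in auto)
    thus ?thesis by (simp add: z_def)
  qed
  have A1: "A n \<le> 1"
  proof -
    have "16 / (real N + 2) \<le> 16 / (m + 3)" by (rule divide_left_mono) (use mN in auto)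
    thus ?thesis by (simp add: A_def m_def)
  qed
  have An1: "A (n + 1) = A n - 16 / ((m + 2) * (m + 3))"
  proof -
    have "16 / (m + 2) - 16 / (m + 3) = 16 / ((m + 2) * (m + 3))" using mN by (simp add: field_simps)
    thus ?thesis unfolding A_def Mn1 m_def by (simp add: algebra_simps)
  qed
  have Ar: "A (n + 1) \<le> A n * r" unfolding An1 using Astep[OF A1 r2 r1 z0 zd] .
  have lo: "S0 * Q' / (q 1 + 1) * A (n + 1) \<le> Sigma S0 c (n + 1)"
  proof -
    have c0: "S0 * Q' / (q 1 + 1) \<ge> 0" using S0 Q'lo q1p by simp
    have "S0 * Q' / (q 1 + 1) * A (n + 1) \<le> S0 * Q' / (q 1 + 1) * (A n * r)"
      by (rule mult_left_mono[OF Ar c0])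
    also have "\<dots> = S0 * Q / (q 1 + 1) * A n * (Q' / (Q' + 1))"
      unfolding r_def using Q'p q1p by (simp add: field_simps)
    also have "\<dots> \<le> Sigma S0 c n * (Q' / (Q' + 1))"
      unfolding Q_def by (rule mult_right_mono[OF IH(1) Fp])
    finally show ?thesis unfolding Sg .
  qed
  show ?case using up lo by (simp add: n_def Q'_def)
qed

lemma Sig_inv: assumes "S0 > 0" "1 \<le> n" "n \<le> N - 1"
  shows "S0 * q n / (q 1 + 1) * A n \<le> Sigma S0 c n" "Sigma S0 c n \<le> S0 * q n / (q 1 + 1)"
  using Sig_inv_aux[OF assms(1), of "n - 1"] assms(2,3) by auto


lemma summary: assumes "1 \<le> n" "n \<le> N - 1"
  shows "c n > 0" "1 \<le> 1 / (c n)\<^sup>2" "(real N - real n + 1) / 2 \<le> 1 / (c n)\<^sup>2"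
    "1 / (c n)\<^sup>2 \<le> real N - real n + 1"
    "real N - real n - 16 * sqrt (real N - real n + 1) \<le> 1 / (c n)\<^sup>2"
    "\<bar>b n - sqrt (1 / (c n)\<^sup>2) / 2\<bar> \<le> 17 / 2"
    "a n + b n = (1 / (c n)\<^sup>2 - 1) / sqrt (1 / (c n)\<^sup>2 + 1)"
proof -
  show "c n > 0" using cpos[of n] assms by simp
  have I: "Inv n" using Inv_all assms by simp
  have p: "8 / sqrt ((M n + 1) / 2) \<ge> 0" using assms by (simp add: M_def)
  show "1 \<le> 1 / (c n)\<^sup>2" "(real N - real n + 1) / 2 \<le> 1 / (c n)\<^sup>2"
    "1 / (c n)\<^sup>2 \<le> real N - real n + 1"
    "real N - real n - 16 * sqrt (real N - real n + 1) \<le> 1 / (c n)\<^sup>2"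
    using I unfolding Inv_def q_def M_def by auto
  show "\<bar>b n - sqrt (1 / (c n)\<^sup>2) / 2\<bar> \<le> 17 / 2" using I p unfolding Inv_def q_def by linarith
  show "a n + b n = (1 / (c n)\<^sup>2 - 1) / sqrt (1 / (c n)\<^sup>2 + 1)" using s_eq[OF assms] by (simp add: q_def)
qed

lemma summary_Sig: assumes "S0 > 0" "1 \<le> n" "n \<le> N - 1"
  shows "S0 * (1 / (c n)\<^sup>2) / (1 / (c 1)\<^sup>2 + 1) * (1 - 16 / (real N - real n + 3) + 16 / (real N + 2)) \<le> Sigma S0 c n"
    "Sigma S0 c n \<le> S0 * (1 / (c n)\<^sup>2) / (1 / (c 1)\<^sup>2 + 1)"
  using Sig_inv[OF assms] unfolding q_def A_def M_def by auto

end


lemma aux_beta: "(d::real) > 0 \<Longrightarrow> x / sqrt d * y * z = x * y * sqrt d * z / d"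
  by (smt (verit) divide_divide_eq_right real_div_sqrt times_divide_eq_left)

lemma idx_props:
  assumes t: "0 < t" "t < 1" and N: "real N * t \<ge> 1"
  shows "1 \<le> idx N t" "idx N t \<le> N - 1" "real (idx N t) \<le> real N * t" "real N * t - 1 < real (idx N t)"
proof -
  have fl: "real_of_int \<lfloor>real N * t\<rfloor> \<le> real N * t" "real N * t - 1 < real_of_int \<lfloor>real N * t\<rfloor>"
    by linarith+
  have f1: "\<lfloor>real N * t\<rfloor> \<ge> 1" using N by (simp add: le_floor_iff)
  have r: "real (idx N t) = real_of_int \<lfloor>real N * t\<rfloor>" using f1 by (simp add: idx_def)
  show "1 \<le> idx N t" using f1 unfolding idx_def by linarith
  show "real (idx N t) \<le> real N * t" using r fl by simp
  show "real N * t - 1 < real (idx N t)" using r fl by simp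
  have "N \<noteq> 0" using N by (cases N) auto
  hence Np: "real N > 0" by simp
  have "real N * t < real N" using t Np by simp
  hence "real (idx N t) < real N" using r fl by linarith
  hence "idx N t < N" by simp
  thus "idx N t \<le> N - 1" by simp
qed

theorem theorem4:
  fixes a b c :: "nat \<Rightarrow> nat \<Rightarrow> real" and S0 su t :: real
  assumes cpos: "\<And>N n. N \<ge> 1 \<Longrightarrow> 1 \<le> n \<Longrightarrow> n \<le> N \<Longrightarrow> c N n > 0"
    and aterm: "\<And>N. N \<ge> 1 \<Longrightarrow> a N (N - 1) = 0"
    and bterm: "\<And>N. N \<ge> 1 \<Longrightarrow> b N (N - 1) = 1/2"
    and cterm: "\<And>N. N \<ge> 1 \<Longrightarrow> c N N = 1"
    and arec: "\<And>N n. N \<ge> 1 \<Longrightarrow> 1 \<le> n \<Longrightarrow> n \<le> N - 1 \<Longrightarrow>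
       a N (n - 1) = a N n * (1 / ((c N n)\<^sup>2 + 1)) powr (1/2)
                    + b N n * (1 / ((c N n)\<^sup>2 + 1)) powr (3/2) * (c N n)\<^sup>2"
    and brec: "\<And>N n. N \<ge> 1 \<Longrightarrow> 1 \<le> n \<Longrightarrow> n \<le> N - 1 \<Longrightarrow>
       b N (n - 1) = b N n * (1 / ((c N n)\<^sup>2 + 1)) powr (3/2)
                    + c N n / ((c N n)\<^sup>2 + 1)"
    and abrel: "\<And>N n. N \<ge> 1 \<Longrightarrow> 1 \<le> n \<Longrightarrow> n \<le> N - 1 \<Longrightarrow>
       a N n + b N n = (1 - (c N n)\<^sup>2) / (c N n * (1 + (c N n)\<^sup>2) powr (1/2))"
    and S0pos: "S0 > 0"
    and supos: "su > 0"
    and t01: "0 < t" "t < 1"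
  shows "((\<lambda>N. c N (idx N t)) \<longlonglongrightarrow> 0)
    \<and> (filterlim (\<lambda>N. b N (idx N t)) at_top sequentially)
    \<and> (filterlim (\<lambda>N. a N (idx N t)) at_top sequentially)
    \<and> ((\<lambda>N. c N (idx N t) / sqrt (dtN N)) \<longlonglongrightarrow> 1 / sqrt (1 - t))
    \<and> ((\<lambda>N. b N (idx N t) * sqrt (dtN N)) \<longlonglongrightarrow> (1/2) * sqrt (1 - t))
    \<and> ((\<lambda>N. a N (idx N t) * sqrt (dtN N)) \<longlonglongrightarrow> (1/2) * sqrt (1 - t))
    \<and> ((\<lambda>N. Sigma S0 (c N) (idx N t)) \<longlonglongrightarrow> (1 - t) * S0)
    \<and> ((\<lambda>N. lambda S0 su N (c N) (idx N t)) \<longlonglongrightarrow> sqrt S0 / su)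
    \<and> ((\<lambda>N. beta S0 su N (c N) (idx N t) / dtN N) \<longlonglongrightarrow> su / ((1 - t) * sqrt S0))"
proof -
  define n where "n N = idx N t" for N
  define qq where "qq N k = 1 / (c N k)\<^sup>2" for N k
  define m where "m N = real N - real (n N)" for N
  have K: "kyle N (a N) (b N) (c N)" if "N \<ge> 2" for N
  proof
    show "2 \<le> N" using that .
  qed (use that cpos aterm bterm arec brec abrel in auto)
  define N0 where "N0 = nat \<lceil>1 / t\<rceil> + 2"
  have goodN: "2 \<le> N \<and> 1 \<le> n N \<and> n N \<le> N - 1 \<and> real (n N) \<le> real N * t
      \<and> real N * t - 1 < real (n N)" if "N \<ge> N0" for N
  proof -
    have "real N \<ge> 1 / t" using that unfolding N0_def by linarith
    hence "real N * t \<ge> 1" using t01 by (simp add: field_simps)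
    moreover have "N \<ge> 2" using that unfolding N0_def by simp
    ultimately show ?thesis using idx_props[OF t01] unfolding n_def by blast
  qed
  have G: "eventually (\<lambda>N. 2 \<le> N \<and> 1 \<le> n N \<and> n N \<le> N - 1 \<and> real (n N) \<le> real N * t
      \<and> real N * t - 1 < real (n N)) sequentially"
    using eventually_ge_at_top[of N0] by eventually_elim (use goodN in blast)
  have F: "c N (n N) > 0 \<and> 1 \<le> qq N (n N) \<and> qq N (n N) \<le> m N + 1
      \<and> m N - 16 * sqrt (m N + 1) \<le> qq N (n N)
      \<and> \<bar>b N (n N) - sqrt (qq N (n N)) / 2\<bar> \<le> 17 / 2
      \<and> a N (n N) + b N (n N) = (qq N (n N) - 1) / sqrt (qq N (n N) + 1)
      \<and> 1 \<le> qq N 1 \<and> qq N 1 \<le> real N \<and> real N - 1 - 16 * sqrt (real N) \<le> qq N 1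
      \<and> (1 - t) * real N \<le> m N \<and> m N \<le> (1 - t) * real N + 1
      \<and> S0 * qq N (n N) / (qq N 1 + 1) * (1 - 16 / (m N + 3) + 16 / (real N + 2)) \<le> Sigma S0 (c N) (n N)
      \<and> Sigma S0 (c N) (n N) \<le> S0 * qq N (n N) / (qq N 1 + 1)"
    if g: "2 \<le> N" "1 \<le> n N" "n N \<le> N - 1" "real (n N) \<le> real N * t" "real N * t - 1 < real (n N)" for N
  proof -
    interpret kyle N "a N" "b N" "c N" using K g(1) .
    note S = summary[OF g(2,3)]
    have g1: "1 \<le> (1::nat)" "1 \<le> N - 1" using g(1) by auto
    note S1 = summary[OF g1]
    have r1: "real (N - 1) = real N - 1" using g(1) by (simp add: of_nat_diff)
    note SS = summary_Sig[OF S0pos g(2,3)]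
    show ?thesis using S S1 SS g(4,5) unfolding qq_def m_def by (auto simp: r1 algebra_simps)
  qed
  have Np: "eventually (\<lambda>N. real N > 0) sequentially" using G by eventually_elim auto
  have LX: "((\<lambda>N. qq N (n N) / real N) \<longlonglongrightarrow> 1 - t)"
  proof (rule tendsto_sandwich)
    show "eventually (\<lambda>N. 1 - t - 16 * sqrt (real N + 2) / real N \<le> qq N (n N) / real N) sequentially"
      using G
    proof eventually_elim
      case (elim N)
      note f = F[OF conjunct1[OF elim] conjunct1[OF conjunct2[OF elim]] conjunct1[OF conjunct2[OF conjunct2[OF elim]]]
          conjunct1[OF conjunct2[OF conjunct2[OF conjunct2[OF elim]]]] conjunct2[OF conjunct2[OF conjunct2[OF conjunct2[OF elim]]]]]
      have Npos: "real N > 0" using elim by auto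
      have "(1 - t) * real N \<le> 1 * real N" using t01 by (intro mult_right_mono) auto
      hence "m N + 1 \<le> real N + 2" using f by linarith
      hence "sqrt (m N + 1) \<le> sqrt (real N + 2)" by simp
      hence "(1 - t) * real N - 16 * sqrt (real N + 2) \<le> qq N (n N)" using f by linarith
      hence "((1 - t) * real N - 16 * sqrt (real N + 2)) / real N \<le> qq N (n N) / real N"
        using Npos by (simp add: divide_right_mono)
      thus ?case using Npos by (simp add: diff_divide_distrib)
    qed
    show "eventually (\<lambda>N. qq N (n N) / real N \<le> 1 - t + 2 / real N) sequentially"
      using G
    proof eventually_elim
      case (elim N)
      note f = F[OF conjunct1[OF elim] conjunct1[OF conjunct2[OF elim]] conjunct1[OF conjunct2[OF conjunct2[OF elim]]]
          conjunct1[OF conjunct2[OF conjunct2[OF conjunct2[OF elim]]]] conjunct2[OF conjunct2[OF conjunct2[OF conjunct2[OF elim]]]]]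
      have Npos: "real N > 0" using elim by auto
      have "qq N (n N) \<le> (1 - t) * real N + 2" using f by linarith
      hence "qq N (n N) / real N \<le> ((1 - t) * real N + 2) / real N"
        using Npos by (simp add: divide_right_mono)
      thus ?case using Npos by (simp add: add_divide_distrib)
    qed
    show "((\<lambda>N. 1 - t - 16 * sqrt (real N + 2) / real N) \<longlonglongrightarrow> 1 - t)" by real_asymp
    show "((\<lambda>N. 1 - t + 2 / real N) \<longlonglongrightarrow> 1 - t)" by real_asymp
  qed
  have G2: "eventually (\<lambda>N. real N > 0 \<and> 1 \<le> n N \<and> c N (n N) > 0 \<and> 1 \<le> qq N (n N) \<and> qq N (n N) \<le> m N + 1
      \<and> m N - 16 * sqrt (m N + 1) \<le> qq N (n N)
      \<and> \<bar>b N (n N) - sqrt (qq N (n N)) / 2\<bar> \<le> 17 / 2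
      \<and> a N (n N) + b N (n N) = (qq N (n N) - 1) / sqrt (qq N (n N) + 1)
      \<and> 1 \<le> qq N 1 \<and> qq N 1 \<le> real N \<and> real N - 1 - 16 * sqrt (real N) \<le> qq N 1
      \<and> (1 - t) * real N \<le> m N \<and> m N \<le> (1 - t) * real N + 1
      \<and> S0 * qq N (n N) / (qq N 1 + 1) * (1 - 16 / (m N + 3) + 16 / (real N + 2)) \<le> Sigma S0 (c N) (n N)
      \<and> Sigma S0 (c N) (n N) \<le> S0 * qq N (n N) / (qq N 1 + 1)) sequentially"
    using G
  proof eventually_elim
    case (elim N)
    hence "real N > 0" by auto
    thus ?case using F[of N] elim by auto
  qed
  have Ldt: "((\<lambda>N. dtN N) \<longlonglongrightarrow> 0)" unfolding dtN_def by real_asymp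
  have Lsdt: "((\<lambda>N. sqrt (dtN N)) \<longlonglongrightarrow> 0)" unfolding dtN_def by real_asymp
  have Linv: "((\<lambda>N. 1 / real N) \<longlonglongrightarrow> 0)" by real_asymp
  have LY: "((\<lambda>N. qq N 1 / real N) \<longlonglongrightarrow> 1)"
  proof (rule tendsto_sandwich)
    show "eventually (\<lambda>N. (real N - 1 - 16 * sqrt (real N)) / real N \<le> qq N 1 / real N) sequentially"
      using G2 by eventually_elim (auto intro: divide_right_mono)
    show "eventually (\<lambda>N. qq N 1 / real N \<le> 1) sequentially"
      using G2 by eventually_elim auto
    show "((\<lambda>N. (real N - 1 - 16 * sqrt (real N)) / real N) \<longlonglongrightarrow> 1)" by real_asymp
  qed simp
  have LZ: "((\<lambda>N. qq N (n N) / (qq N 1 + 1)) \<longlonglongrightarrow> 1 - t)"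
  proof -
    have "((\<lambda>N. (qq N (n N) / real N) / (qq N 1 / real N + 1 / real N)) \<longlonglongrightarrow> (1 - t) / (1 + 0))"
      by (intro tendsto_divide tendsto_add LX LY Linv) auto
    hence l: "((\<lambda>N. (qq N (n N) / real N) / (qq N 1 / real N + 1 / real N)) \<longlonglongrightarrow> 1 - t)" by simp
    show ?thesis
    proof (rule Lim_transform_eventually[OF l])
      show "eventually (\<lambda>N. (qq N (n N) / real N) / (qq N 1 / real N + 1 / real N) = qq N (n N) / (qq N 1 + 1)) sequentially"
        using G2
      proof eventually_elim
        case (elim N)
        hence p: "real N > 0" "qq N 1 + 1 > 0" by auto
        have "qq N 1 / real N + 1 / real N = (qq N 1 + 1) / real N" by (simp add: add_divide_distrib)
        thus ?case using p by simp
      qed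
    qed
  qed
  have LSig: "((\<lambda>N. Sigma S0 (c N) (n N)) \<longlonglongrightarrow> (1 - t) * S0)"
  proof (rule tendsto_sandwich)
    show "eventually (\<lambda>N. S0 * (qq N (n N) / (qq N 1 + 1)) * (1 - 16 / ((1 - t) * real N + 3)) \<le> Sigma S0 (c N) (n N)) sequentially"
      using G2
    proof eventually_elim
      case (elim N)
      have z: "S0 * (qq N (n N) / (qq N 1 + 1)) \<ge> 0" using elim S0pos by auto
      have p: "(1 - t) * real N + 3 > 0" using elim t01 by (auto intro: add_nonneg_pos)
      have "16 / (m N + 3) \<le> 16 / ((1 - t) * real N + 3)"
        by (rule divide_left_mono) (use elim p in auto)
      moreover have "16 / (real N + 2) \<ge> 0" by simp
      ultimately have "1 - 16 / ((1 - t) * real N + 3) \<le> 1 - 16 / (m N + 3) + 16 / (real N + 2)" by linarith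
      hence "S0 * (qq N (n N) / (qq N 1 + 1)) * (1 - 16 / ((1 - t) * real N + 3))
          \<le> S0 * (qq N (n N) / (qq N 1 + 1)) * (1 - 16 / (m N + 3) + 16 / (real N + 2))"
        by (rule mult_left_mono) (use z in simp)
      thus ?case using elim by simp
    qed
    show "eventually (\<lambda>N. Sigma S0 (c N) (n N) \<le> S0 * (qq N (n N) / (qq N 1 + 1))) sequentially"
      using G2 by eventually_elim simp
    have l16: "((\<lambda>N. 16 / ((1 - t) * real N + 3)) \<longlonglongrightarrow> 0)" using t01 by real_asymp
    have "((\<lambda>N. S0 * (qq N (n N) / (qq N 1 + 1)) * (1 - 16 / ((1 - t) * real N + 3))) \<longlonglongrightarrow> S0 * (1 - t) * (1 - 0))"
      by (intro tendsto_mult tendsto_diff LZ l16 tendsto_const)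
    thus "((\<lambda>N. S0 * (qq N (n N) / (qq N 1 + 1)) * (1 - 16 / ((1 - t) * real N + 3))) \<longlonglongrightarrow> (1 - t) * S0)"
      by (simp add: mult.commute)
    have "((\<lambda>N. S0 * (qq N (n N) / (qq N 1 + 1))) \<longlonglongrightarrow> S0 * (1 - t))"
      by (intro tendsto_mult LZ tendsto_const)
    thus "((\<lambda>N. S0 * (qq N (n N) / (qq N 1 + 1))) \<longlonglongrightarrow> (1 - t) * S0)" by (simp add: mult.commute)
  qed
  have t1: "1 - t > 0" using t01 by simp
  have LX': "((\<lambda>N. sqrt (qq N (n N) / real N)) \<longlonglongrightarrow> sqrt (1 - t))"
    by (intro tendsto_real_sqrt LX)
  have Lc: "((\<lambda>N. c N (n N) / sqrt (dtN N)) \<longlonglongrightarrow> 1 / sqrt (1 - t))"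
  proof (rule Lim_transform_eventually)
    show "((\<lambda>N. 1 / sqrt (qq N (n N) / real N)) \<longlonglongrightarrow> 1 / sqrt (1 - t))"
      by (intro tendsto_divide LX' tendsto_const) (use t1 in simp)
    show "eventually (\<lambda>N. 1 / sqrt (qq N (n N) / real N) = c N (n N) / sqrt (dtN N)) sequentially"
      using G2
    proof eventually_elim
      case (elim N)
      hence cp: "c N (n N) > 0" and Np: "real N > 0" by auto
      have "sqrt (qq N (n N)) = 1 / c N (n N)" using cp by (simp add: qq_def real_sqrt_divide)
      thus ?case using cp Np by (simp add: dtN_def real_sqrt_divide)
    qed
  qed
  have Lc0: "((\<lambda>N. c N (n N)) \<longlonglongrightarrow> 0)"
  proof -
    have "((\<lambda>N. c N (n N) / sqrt (dtN N) * sqrt (dtN N)) \<longlonglongrightarrow> 1 / sqrt (1 - t) * 0)"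
      by (intro tendsto_mult Lc Lsdt)
    hence l: "((\<lambda>N. c N (n N) / sqrt (dtN N) * sqrt (dtN N)) \<longlonglongrightarrow> 0)" by simp
    have "eventually (\<lambda>N. c N (n N) / sqrt (dtN N) * sqrt (dtN N) = c N (n N)) sequentially"
      using G2 by eventually_elim (simp add: dtN_def)
    thus ?thesis by (rule Lim_transform_eventually[OF l])
  qed
  have sdtN: "sqrt (dtN N) * sqrt (real N) = 1" if "real N > 0" for N
    using that by (simp add: dtN_def real_sqrt_divide)
  have Lb: "((\<lambda>N. b N (n N) * sqrt (dtN N)) \<longlonglongrightarrow> (1/2) * sqrt (1 - t))"
  proof (rule tendsto_sandwich)
    have key: "b N (n N) * sqrt (dtN N) = sqrt (qq N (n N) / real N) / 2 + (b N (n N) - sqrt (qq N (n N)) / 2) * sqrt (dtN N)"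
      if "real N > 0" "qq N (n N) \<ge> 1" for N
    proof -
      have "sqrt (qq N (n N)) * sqrt (dtN N) = sqrt (qq N (n N) / real N)"
        by (simp add: dtN_def real_sqrt_mult[symmetric])
      thus ?thesis by (simp add: algebra_simps)
    qed
    have eb: "\<bar>(b N (n N) - sqrt (qq N (n N)) / 2) * sqrt (dtN N)\<bar> \<le> 17 / 2 * sqrt (dtN N)"
      if "\<bar>b N (n N) - sqrt (qq N (n N)) / 2\<bar> \<le> 17 / 2" for N
    proof -
      have s0: "sqrt (dtN N) \<ge> 0" by (simp add: dtN_def)
      have "\<bar>b N (n N) - sqrt (qq N (n N)) / 2\<bar> * sqrt (dtN N) \<le> 17 / 2 * sqrt (dtN N)"
        by (rule mult_right_mono[OF that s0])
      thus ?thesis using s0 by (simp add: abs_mult)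
    qed
    show "eventually (\<lambda>N. sqrt (qq N (n N) / real N) / 2 - 17 / 2 * sqrt (dtN N) \<le> b N (n N) * sqrt (dtN N)) sequentially"
      using G2
    proof eventually_elim
      case (elim N)
      thus ?case using key[of N] eb[of N] by (simp add: abs_le_iff)
    qed
    show "eventually (\<lambda>N. b N (n N) * sqrt (dtN N) \<le> sqrt (qq N (n N) / real N) / 2 + 17 / 2 * sqrt (dtN N)) sequentially"
      using G2
    proof eventually_elim
      case (elim N)
      thus ?case using key[of N] eb[of N] by (simp add: abs_le_iff)
    qed
    have "((\<lambda>N. sqrt (qq N (n N) / real N) / 2 - 17 / 2 * sqrt (dtN N)) \<longlonglongrightarrow> sqrt (1 - t) / 2 - 17 / 2 * 0)"
      by (rule tendsto_diff[OF tendsto_divide[OF LX' tendsto_const] tendsto_mult[OF tendsto_const Lsdt]]) simp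
    thus "((\<lambda>N. sqrt (qq N (n N) / real N) / 2 - 17 / 2 * sqrt (dtN N)) \<longlonglongrightarrow> (1/2) * sqrt (1 - t))" by simp
    have "((\<lambda>N. sqrt (qq N (n N) / real N) / 2 + 17 / 2 * sqrt (dtN N)) \<longlonglongrightarrow> sqrt (1 - t) / 2 + 17 / 2 * 0)"
      by (rule tendsto_add[OF tendsto_divide[OF LX' tendsto_const] tendsto_mult[OF tendsto_const Lsdt]]) simp
    thus "((\<lambda>N. sqrt (qq N (n N) / real N) / 2 + 17 / 2 * sqrt (dtN N)) \<longlonglongrightarrow> (1/2) * sqrt (1 - t))" by simp
  qed
  have La: "((\<lambda>N. a N (n N) * sqrt (dtN N)) \<longlonglongrightarrow> (1/2) * sqrt (1 - t))"
  proof -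
    have Ls: "((\<lambda>N. (qq N (n N) / real N - 1 / real N) / sqrt (qq N (n N) / real N + 1 / real N)) \<longlonglongrightarrow> sqrt (1 - t))"
    proof -
      have "((\<lambda>N. (qq N (n N) / real N - 1 / real N) / sqrt (qq N (n N) / real N + 1 / real N)) \<longlonglongrightarrow> (1 - t - 0) / sqrt (1 - t + 0))"
        by (rule tendsto_divide[OF tendsto_diff[OF LX Linv] tendsto_real_sqrt[OF tendsto_add[OF LX Linv]]]) (use t1 in simp)
      thus ?thesis using t1 by (simp add: real_div_sqrt)
    qed
    have "((\<lambda>N. (qq N (n N) / real N - 1 / real N) / sqrt (qq N (n N) / real N + 1 / real N) - b N (n N) * sqrt (dtN N))
        \<longlonglongrightarrow> sqrt (1 - t) - (1/2) * sqrt (1 - t))"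
      by (intro tendsto_diff Ls Lb)
    hence l: "((\<lambda>N. (qq N (n N) / real N - 1 / real N) / sqrt (qq N (n N) / real N + 1 / real N) - b N (n N) * sqrt (dtN N))
        \<longlonglongrightarrow> (1/2) * sqrt (1 - t))" by simp
    show ?thesis
    proof (rule Lim_transform_eventually[OF l])
      show "eventually (\<lambda>N. (qq N (n N) / real N - 1 / real N) / sqrt (qq N (n N) / real N + 1 / real N) - b N (n N) * sqrt (dtN N)
          = a N (n N) * sqrt (dtN N)) sequentially"
        using G2
      proof eventually_elim
        case (elim N)
        hence Np: "real N > 0" and q1: "qq N (n N) \<ge> 1"
          and ab: "a N (n N) = (qq N (n N) - 1) / sqrt (qq N (n N) + 1) - b N (n N)" by auto
        define r where "r = sqrt (real N)"
        have r: "r > 0" using Np by (simp add: r_def)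
        have r2: "real N = r * r" using Np by (simp add: r_def)
        define u where "u = sqrt (qq N (n N) + 1)"
        have u: "u > 0" using q1 by (simp add: u_def)
        have e1: "sqrt (qq N (n N) / real N + 1 / real N) = u / r"
          by (simp add: u_def r_def add_divide_distrib[symmetric] real_sqrt_divide)
        have e2: "sqrt (dtN N) = 1 / r" by (simp add: dtN_def r_def real_sqrt_divide)
        have "(qq N (n N) / real N - 1 / real N) / (u / r) = (qq N (n N) - 1) / u * (1 / r)"
          using r u unfolding r2 by (simp add: field_simps)
        thus ?case unfolding e1 e2 ab u_def[symmetric] by (simp add: algebra_simps)
      qed
    qed
  qed
  have sqrt_top: "filterlim (\<lambda>N. sqrt (real N)) at_top sequentially" by real_asymp
  have half_pos: "(1/2) * sqrt (1 - t) > 0" using t1 by simp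
  have Lbinf: "filterlim (\<lambda>N. b N (n N)) at_top sequentially"
  proof -
    have l: "filterlim (\<lambda>N. b N (n N) * sqrt (dtN N) * sqrt (real N)) at_top sequentially"
      by (rule filterlim_tendsto_pos_mult_at_top[OF Lb half_pos sqrt_top])
    have e: "eventually (\<lambda>N. b N (n N) * sqrt (dtN N) * sqrt (real N) = b N (n N)) sequentially"
      using G2 by eventually_elim (simp add: mult.assoc sdtN)
    show ?thesis by (rule filterlim_cong[OF refl refl e, THEN iffD1, OF l])
  qed
  have Lainf: "filterlim (\<lambda>N. a N (n N)) at_top sequentially"
  proof -
    have l: "filterlim (\<lambda>N. a N (n N) * sqrt (dtN N) * sqrt (real N)) at_top sequentially"
      by (rule filterlim_tendsto_pos_mult_at_top[OF La half_pos sqrt_top])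
    have e: "eventually (\<lambda>N. a N (n N) * sqrt (dtN N) * sqrt (real N) = a N (n N)) sequentially"
      using G2 by eventually_elim (simp add: mult.assoc sdtN)
    show ?thesis by (rule filterlim_cong[OF refl refl e, THEN iffD1, OF l])
  qed
  have LSig': "((\<lambda>N. Sigma S0 (c N) (n N - 1)) \<longlonglongrightarrow> (1 - t) * S0)"
  proof -
    have "((\<lambda>N. Sigma S0 (c N) (n N) * (1 + (c N (n N))\<^sup>2)) \<longlonglongrightarrow> (1 - t) * S0 * (1 + 0\<^sup>2))"
      by (rule tendsto_mult[OF LSig tendsto_add[OF tendsto_const tendsto_power[OF Lc0]]])
    hence l: "((\<lambda>N. Sigma S0 (c N) (n N) * (1 + (c N (n N))\<^sup>2)) \<longlonglongrightarrow> (1 - t) * S0)" by simp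
    have e: "eventually (\<lambda>N. Sigma S0 (c N) (n N) * (1 + (c N (n N))\<^sup>2) = Sigma S0 (c N) (n N - 1)) sequentially"
      using G2
    proof eventually_elim
      case (elim N)
      then obtain k where k: "n N = Suc k" by (cases "n N") auto
      have p: "1 + (c N (Suc k))\<^sup>2 > 0" by (smt (verit) zero_le_power2)
      show ?case unfolding k using p by simp
    qed
    show ?thesis by (rule Lim_transform_eventually[OF l e])
  qed
  define Bv where "Bv = su / ((1 - t) * sqrt S0)"
  have S0s: "sqrt S0 > 0" using S0pos by simp
  have st1: "sqrt (1 - t) > 0" using t1 by simp
  have Lbeta: "((\<lambda>N. beta S0 su N (c N) (n N) / dtN N) \<longlonglongrightarrow> Bv)"
  proof -
    have "((\<lambda>N. c N (n N) / sqrt (dtN N) * su * Sigma S0 (c N) (n N - 1) powr (-1/2))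
        \<longlonglongrightarrow> 1 / sqrt (1 - t) * su * ((1 - t) * S0) powr (-1/2))"
      by (rule tendsto_mult[OF tendsto_mult[OF Lc tendsto_const] tendsto_powr[OF LSig' tendsto_const]])
        (use t1 S0pos in simp)
    moreover have "1 / sqrt (1 - t) * su * ((1 - t) * S0) powr (-1/2) = Bv"
    proof -
      have pw: "((1 - t) * S0) powr (-1/2) = 1 / (sqrt (1 - t) * sqrt S0)"
        using t1 S0pos by (simp add: powr_minus_divide powr_half_sqrt real_sqrt_mult)
      have ss: "sqrt (1 - t) * sqrt (1 - t) = 1 - t" using t1 by simp
      have "1 / sqrt (1 - t) * su * (1 / (sqrt (1 - t) * sqrt S0)) = su / ((sqrt (1 - t) * sqrt (1 - t)) * sqrt S0)"
        using st1 S0s by (simp add: field_simps)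
      thus ?thesis unfolding pw Bv_def ss .
    qed
    ultimately have l: "((\<lambda>N. c N (n N) / sqrt (dtN N) * su * Sigma S0 (c N) (n N - 1) powr (-1/2)) \<longlonglongrightarrow> Bv)"
      by simp
    have e: "eventually (\<lambda>N. c N (n N) / sqrt (dtN N) * su * Sigma S0 (c N) (n N - 1) powr (-1/2)
        = beta S0 su N (c N) (n N) / dtN N) sequentially"
      using G2
    proof eventually_elim
      case (elim N)
      hence dp: "dtN N > 0" by (simp add: dtN_def)
      show ?case unfolding beta_def by (rule aux_beta[OF dp])
    qed
    show ?thesis by (rule Lim_transform_eventually[OF l e])
  qed
  have Llam: "((\<lambda>N. lambda S0 su N (c N) (n N)) \<longlonglongrightarrow> sqrt S0 / su)"
  proof -
    have "((\<lambda>N. (beta S0 su N (c N) (n N) / dtN N) * Sigma S0 (c N) (n N - 1)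
        / ((beta S0 su N (c N) (n N) / dtN N)\<^sup>2 * dtN N * Sigma S0 (c N) (n N - 1) + su\<^sup>2))
        \<longlonglongrightarrow> Bv * ((1 - t) * S0) / (Bv\<^sup>2 * 0 * ((1 - t) * S0) + su\<^sup>2))"
      by (rule tendsto_divide[OF tendsto_mult[OF Lbeta LSig']
            tendsto_add[OF tendsto_mult[OF tendsto_mult[OF tendsto_power[OF Lbeta] Ldt] LSig'] tendsto_const]])
        (use supos in simp)
    moreover have "Bv * ((1 - t) * S0) / (Bv\<^sup>2 * 0 * ((1 - t) * S0) + su\<^sup>2) = sqrt S0 / su"
    proof -
      have "S0 / sqrt S0 = sqrt S0" using S0pos by (simp add: real_div_sqrt)
      hence "Bv * ((1 - t) * S0) = su * sqrt S0" unfolding Bv_def using t1 S0s by (simp add: field_simps)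
      thus ?thesis using supos by (simp add: power2_eq_square)
    qed
    ultimately have l: "((\<lambda>N. (beta S0 su N (c N) (n N) / dtN N) * Sigma S0 (c N) (n N - 1)
        / ((beta S0 su N (c N) (n N) / dtN N)\<^sup>2 * dtN N * Sigma S0 (c N) (n N - 1) + su\<^sup>2))
        \<longlonglongrightarrow> sqrt S0 / su)" by simp
    have e: "eventually (\<lambda>N. (beta S0 su N (c N) (n N) / dtN N) * Sigma S0 (c N) (n N - 1)
        / ((beta S0 su N (c N) (n N) / dtN N)\<^sup>2 * dtN N * Sigma S0 (c N) (n N - 1) + su\<^sup>2)
        = lambda S0 su N (c N) (n N)) sequentially"
      using G2
    proof eventually_elim
      case (elim N)
      hence dp: "dtN N > 0" by (simp add: dtN_def)
      define B where "B = beta S0 su N (c N) (n N)"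
      define Sg where "Sg = Sigma S0 (c N) (n N - 1)"
      have "B / dtN N * Sg / ((B / dtN N)\<^sup>2 * dtN N * Sg + su\<^sup>2) = B * Sg / (B\<^sup>2 * Sg + su\<^sup>2 * dtN N)"
      proof -
        have "(B / dtN N)\<^sup>2 * dtN N * Sg + su\<^sup>2 = (B\<^sup>2 * Sg + su\<^sup>2 * dtN N) / dtN N"
          using dp by (simp add: field_simps power2_eq_square)
        thus ?thesis using dp by simp
      qed
      thus ?case unfolding lambda_def B_def Sg_def .
    qed
    show ?thesis by (rule Lim_transform_eventually[OF l e])
  qed
  have Lbeta': "((\<lambda>N. beta S0 su N (c N) (n N) / dtN N) \<longlonglongrightarrow> su / ((1 - t) * sqrt S0))"
    using Lbeta unfolding Bv_def .
  show ?thesis unfolding n_def[symmetric]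
    by (intro conjI Lc0 Lbinf Lainf Lc Lb La LSig Llam Lbeta')
qed


end
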